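(* For every positive integer $m$ and every distribution $\mathcal D$ on $[0,1]\times\{0,1\}$, $\mathsf{SCDL}_{2m}(\mathcal D)\ge\mathsf{SCDL}_m(\mathcal D)$.
   Context: For $x\in\mathbb R$ write $x_+=\max\{x,0\}$. For a distribution $\mathcal D$ of $(p,y)\in[0,1]\times\{0,1\}$, a positive integer $m$ and $i\in\{0,\ldots,m\}$, let $w_i(p)=(1-|mp-i|)_+$, $\pi_i=\mathbb E_{\mathcal D}[w_i(p)]$ and $q_i=\mathbb E_{\mathcal D}[w_i(p)y]/\pi_i$ (terms with $\pi_i=0$ are $0$). Define $$\mathsf{SCDL}_m(\mathcal D)=\max_{i=0,\ldots,m}\Big(\sum_{j=0}^{i}\pi_j\big(q_j-\tfrac{i+1}{m}\big)_+ +\sum_{j=i+1}^{m}\pi_j\big(\tfrac im-q_j\big)_+\Big).$$ *)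

theory Defs
  imports "HOL-Probability.Probability"
begin

text \<open>A distribution D of pairs (p,y) in [0,1] x {0,1} is modelled as a probability
measure on real x bool (Borel sets) that is concentrated on [0,1] in the first
component; the label y is read as the real number of_bool y.\<close>

definition dist01 :: "(real \<times> bool) measure \<Rightarrow> bool" where
  "dist01 D \<longleftrightarrow> prob_space D \<and> sets D = sets borel \<and> (AE x in D. fst x \<in> {0..1})"

definition wt :: "nat \<Rightarrow> nat \<Rightarrow> real \<Rightarrow> real" where
  "wt m i p = max (1 - \<bar>real m * p - real i\<bar>) 0"

definition piw :: "(real \<times> bool) measure \<Rightarrow> nat \<Rightarrow> nat \<Rightarrow> real" where
  "piw D m i = (\<integral>x. wt m i (fst x) \<partial>D)"

definition qw :: "(real \<times> bool) measure \<Rightarrow> nat \<Rightarrow> nat \<Rightarrow> real" where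
  "qw D m i = (if piw D m i = 0 then 0
               else (\<integral>x. wt m i (fst x) * of_bool (snd x) \<partial>D) / piw D m i)"

definition SCDL :: "nat \<Rightarrow> (real \<times> bool) measure \<Rightarrow> real" where
  "SCDL m D = Max ((\<lambda>i. (\<Sum>j\<in>{0..i}. piw D m j * max (qw D m j - real (i + 1) / real m) 0)
                      + (\<Sum>j\<in>{i+1..m}. piw D m j * max (real i / real m - qw D m j) 0)) ` {0..m})"

end

theory Submission
  imports Defs
begin

lemma sum_lo: "(\<Sum>j=0..(i::nat). (if j>0 then \<phi>(2*j-1)/2 else 0) + \<phi>(2*j) + \<phi>(2*j+1)/2)
   = (\<Sum>k=0..2*i. (\<phi> k::real)) + \<phi>(2*i+1)/2"
proof (induction i)
  case 0
  then show ?case by simp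
next
  case (Suc i)
  have e: "2 * Suc i = Suc (Suc (2*i))" by simp
  show ?case unfolding e sum.atLeast0_atMost_Suc Suc by simp
qed

lemma sum_hi: "(\<Sum>j=Suc i..Suc i + d. \<psi>(2*j-1)/2 + \<psi>(2*j) + \<psi>(2*j+1)/2)
   = \<psi>(2*i+1)/2 + (\<Sum>k=2*i+2..2*(Suc i+d). (\<psi> k::real)) + \<psi>(2*(Suc i + d)+1)/2"
proof (induction d)
  case 0
  then show ?case by simp
next
  case (Suc d)
  have e: "2 * (Suc i + Suc d) = Suc (Suc (2*(Suc i + d)))" by simp
  have e2: "Suc i + Suc d = Suc (Suc i + d)" by simp
  show ?case unfolding e e2 sum.cl_ivl_Suc Suc by simp
qed

lemma maxsub3: "max ((x::real)/2+y+z/2) 0 \<le> max x 0/2 + max y 0 + max z 0/2"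
  by (simp add: max_def)
lemma maxsub2: "max ((y::real)+z/2) 0 \<le> max y 0 + max z 0/2"
  by (simp add: max_def)

lemma comb:
  fixes f g F G :: "nat \<Rightarrow> real" and m i :: nat
  assumes m: "m > 0" and f0: "\<And>k. f k \<ge> 0"
  and F: "\<And>j. F j = (if j>0 then f(2*j-1)/2 else 0) + f(2*j) + f(2*j+1)/2"
  and G: "\<And>j. G j = (if j>0 then g(2*j-1)/2 else 0) + g(2*j) + g(2*j+1)/2"
  and topf: "f (2*m+1) = 0" and topg: "g (2*m+1) = 0"
  and i: "i \<le> m"
  shows "\<exists>i'\<in>{0..2*m}. (\<Sum>j=0..i. max (G j - real (i+1) / real m * F j) 0)
       + (\<Sum>j\<in>{i+1..m}. max (real i / real m * F j - G j) 0)
     \<le> (\<Sum>k=0..i'. max (g k - real (i'+1) / real (2*m) * f k) 0)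
       + (\<Sum>k\<in>{i'+1..2*m}. max (real i' / real (2*m) * f k - g k) 0)"
proof -
  define \<phi> where "\<phi> t k = max (g k - t * f k) (0::real)" for t k
  define \<psi> where "\<psi> t k = max (t * f k - g k) (0::real)" for t k
  define t1 where "t1 = real (i+1) / real m"
  define t2 where "t2 = real i / real m"
  have phim: "\<phi> t k \<le> \<phi> t' k" if "t' \<le> t" for t t' k
    unfolding \<phi>_def using mult_right_mono[OF that f0[of k]] by simp
  have psim: "\<psi> t' k \<le> \<psi> t k" if "t' \<le> t" for t t' k
    unfolding \<psi>_def using mult_right_mono[OF that f0[of k]] by simp
  have phi0: "\<phi> t k \<ge> 0" "\<psi> t k \<ge> 0" for t k unfolding \<phi>_def \<psi>_def by auto
  have le1: "max (G j - t*F j) 0 \<le> (if j>0 then \<phi> t (2*j-1)/2 else 0) + \<phi> t (2*j) + \<phi> t (2*j+1)/2" for j t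
  proof (cases "j > 0")
    case True
    have "G j - t*F j = (g (2*j-1) - t * f (2*j-1))/2 + (g (2*j) - t * f (2*j)) + (g (2*j+1) - t * f (2*j+1))/2"
      using True by (simp add: F G field_simps)
    then show ?thesis using True maxsub3 unfolding \<phi>_def by simp
  next
    case False
    have "G j - t*F j = (g (2*j) - t * f (2*j)) + (g (2*j+1) - t * f (2*j+1))/2"
      using False by (simp add: F G field_simps)
    then show ?thesis using False maxsub2 unfolding \<phi>_def by simp
  qed
  have le2: "max (t*F j - G j) 0 \<le> \<psi> t (2*j-1)/2 + \<psi> t (2*j) + \<psi> t (2*j+1)/2" if "j > 0" for j t
  proof -
    have "t*F j - G j = (t * f (2*j-1) - g (2*j-1))/2 + (t * f (2*j) - g (2*j)) + (t * f (2*j+1) - g (2*j+1))/2"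
      using that by (simp add: F G field_simps)
    then show ?thesis using maxsub3 unfolding \<psi>_def by simp
  qed
  define A where "A = (\<Sum>k=0..2*i. \<phi> t1 k)"
  define B where "B = (\<Sum>k=2*i+2..2*m. \<psi> t2 k)"
  define a where "a = \<phi> t1 (2*i+1)"
  define b where "b = \<psi> t2 (2*i+1)"
  have top1: "\<phi> t k = 0" "\<psi> t k = 0" if "k = 2*m+1" for t k
    using that topf topg unfolding \<phi>_def \<psi>_def by auto
  have C1: "(\<Sum>j=0..i. max (G j - t1 * F j) 0) \<le> A + a/2"
  proof -
    have "(\<Sum>j=0..i. max (G j - t1 * F j) 0) \<le> (\<Sum>j=0..i. (if j>0 then \<phi> t1 (2*j-1)/2 else 0) + \<phi> t1 (2*j) + \<phi> t1 (2*j+1)/2)"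
      by (intro sum_mono le1)
    also have "\<dots> = A + a/2" unfolding A_def a_def by (rule sum_lo)
    finally show ?thesis .
  qed
  have C2: "(\<Sum>j\<in>{i+1..m}. max (t2 * F j - G j) 0) \<le> b/2 + B"
  proof (cases "i < m")
    case True
    have "(\<Sum>j\<in>{i+1..m}. max (t2 * F j - G j) 0) \<le> (\<Sum>j\<in>{i+1..m}. \<psi> t2 (2*j-1)/2 + \<psi> t2 (2*j) + \<psi> t2 (2*j+1)/2)"
      by (intro sum_mono le2) auto
    also have "\<dots> = b/2 + B + \<psi> t2 (2*m+1)/2"
    proof -
      have e: "m = Suc i + (m - i - 1)" using True by simp
      show ?thesis unfolding b_def B_def
        using sum_hi[of "\<psi> t2" i "m - i - 1"] e[symmetric] by simp
    qed
    finally show ?thesis using top1 by simp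
  next
    case False
    then have "i = m" using i by simp
    then show ?thesis unfolding b_def B_def using top1 by simp
  qed
  have a0: "a \<ge> 0" "b \<ge> 0" unfolding a_def b_def using phi0 by auto
  have Fe: "(\<Sum>k=0..2*i. max (g k - real (2*i+1) / real (2*m) * f k) 0)
       + (\<Sum>k\<in>{2*i+1..2*m}. max (real (2*i) / real (2*m) * f k - g k) 0) \<ge> A + b + B"
  proof -
    have "A \<le> (\<Sum>k=0..2*i. max (g k - real (2*i+1) / real (2*m) * f k) 0)"
      unfolding A_def \<phi>_def[symmetric]
      by (intro sum_mono phim) (use m in \<open>auto simp: t1_def divide_simps\<close>)
    moreover have "(\<Sum>k\<in>{2*i+1..2*m}. max (real (2*i) / real (2*m) * f k - g k) 0) = b + B"
    proof (cases "i < m")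
      case True
      have "(\<Sum>k\<in>{2*i+1..2*m}. max (real (2*i) / real (2*m) * f k - g k) 0) = (\<Sum>k\<in>{2*i+1..2*m}. \<psi> t2 k)"
        unfolding \<psi>_def t2_def using m by (simp add: divide_simps)
      also have "\<dots> = b + B" unfolding b_def B_def using True
        by (subst sum.atLeast_Suc_atMost) auto
      finally show ?thesis .
    next
      case False
      then have "i = m" using i by simp
      then show ?thesis unfolding b_def B_def using top1 by simp
    qed
    ultimately show ?thesis by simp
  qed
  have Fo: "(\<Sum>k=0..2*i+1. max (g k - real (2*i+1+1) / real (2*m) * f k) 0)
       + (\<Sum>k\<in>{2*i+1+1..2*m}. max (real (2*i+1) / real (2*m) * f k - g k) 0) \<ge> A + a + B"
  proof -
    have "(\<Sum>k=0..2*i+1. max (g k - real (2*i+1+1) / real (2*m) * f k) 0) = (\<Sum>k=0..2*i+1. \<phi> t1 k)"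
    proof -
      have "real (2*i+1+1) / real (2*m) = t1" unfolding t1_def using m by (simp add: divide_simps)
      then show ?thesis unfolding \<phi>_def by simp
    qed
    also have "\<dots> = A + a" unfolding A_def a_def by simp
    finally have 1: "(\<Sum>k=0..2*i+1. max (g k - real (2*i+1+1) / real (2*m) * f k) 0) = A + a" .
    have "B \<le> (\<Sum>k\<in>{2*i+1+1..2*m}. max (real (2*i+1) / real (2*m) * f k - g k) 0)"
      unfolding B_def \<psi>_def[symmetric] one_add_one[symmetric] add.assoc[symmetric]
      by (intro sum_mono psim) (use m in \<open>auto simp: t2_def divide_simps\<close>)
    with 1 show ?thesis by simp
  qed
  have Cle: "(\<Sum>j=0..i. max (G j - real (i+1) / real m * F j) 0)
       + (\<Sum>j\<in>{i+1..m}. max (real i / real m * F j - G j) 0) \<le> A + B + a/2 + b/2"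
    using C1 C2 unfolding t1_def t2_def by simp
  show ?thesis
  proof (cases "i < m \<and> b \<le> a")
    case True
    show ?thesis
      by (rule bexI[of _ "2*i+1"]) (use True Cle Fo in auto)
  next
    case False
    have "a/2 \<le> b/2"
    proof (cases "i < m")
      case True then show ?thesis using False by simp
    next
      case False
      then have "i = m" using i by simp
      then have "a = 0" unfolding a_def using top1 by simp
      then show ?thesis using a0 by simp
    qed
    then show ?thesis
      by (intro bexI[of _ "2*i"]) (use i Cle Fe a0 in auto)
  qed
qed


lemma wt_nonneg: "0 \<le> wt m j p" unfolding wt_def by simp
lemma wt_le1: "wt m j p \<le> 1" unfolding wt_def by simp

lemma meas_wt: "(\<lambda>x::real\<times>bool. wt m j (fst x)) \<in> borel_measurable borel"
  unfolding wt_def by (intro borel_measurable_continuous_onI continuous_intros)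

lemma meas_b: "(\<lambda>x::real\<times>bool. of_bool (snd x) :: real) \<in> borel_measurable borel"
proof -
  have o: "open (UNIV \<times> {True})"
  proof -
    have "{True} = {False<..}" by auto
    then have "open {True}" by (metis open_greaterThan)
    then show ?thesis by (intro open_Times) auto
  qed
  have "(\<lambda>x::real\<times>bool. of_bool (snd x) :: real) = indicator (UNIV \<times> {True})"
    by (auto simp: indicator_def fun_eq_iff)
  moreover have "indicator (UNIV \<times> {True}) \<in> borel_measurable (borel :: (real\<times>bool) measure)"
    using o by (intro borel_measurable_indicator borel_open)
  ultimately show ?thesis by simp
qed

lemma ar0: "(x::real) \<ge> 0 \<Longrightarrow> max (1 - \<bar>x\<bar>) 0 = max (1 - \<bar>2*x\<bar>) 0 + max (1 - \<bar>2*x - 1\<bar>) 0 / 2"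
  by (auto simp: max_def abs_if)
lemma ar1: "max (1 - \<bar>(x::real)\<bar>) 0 = max (1 - \<bar>2*x+1\<bar>) 0 / 2 + max (1 - \<bar>2*x\<bar>) 0 + max (1 - \<bar>2*x - 1\<bar>) 0 / 2"
  by (auto simp: max_def abs_if)

lemma wt_refine:
  assumes "0 \<le> p"
  shows "wt m j p = (if j>0 then wt (2*m) (2*j-1) p / 2 else 0) + wt (2*m) (2*j) p + wt (2*m) (2*j+1) p / 2"
proof (cases "j = 0")
  case True
  have "0 \<le> real m * p" using assms by simp
  from ar0[OF this] show ?thesis using True unfolding wt_def by (simp add: algebra_simps)
next
  case False
  then have e: "real (2*j-1) = 2 * real j - 1" by (simp add: of_nat_diff)
  from ar1[of "real m * p - real j"] show ?thesis using False unfolding wt_def e by (simp add: algebra_simps)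
qed

lemma wt_top: "p \<le> 1 \<Longrightarrow> wt (2*m) (2*m+1) p = 0"
proof -
  assume "p \<le> 1"
  then have "real m * p \<le> real m" by (simp add: mult_left_le)
  then show ?thesis unfolding wt_def by (auto simp: max_def abs_if)
qed

lemma conv1: "0 \<le> (R::real) \<Longrightarrow> R \<le> P \<Longrightarrow>
   P * max ((if P = 0 then 0 else R / P) - t) 0 = max (R - t * P) 0"
proof (cases "P = 0")
  case False
  assume "0 \<le> R" "R \<le> P"
  then have "P > 0" using False by simp
  then have "P * max (R / P - t) 0 = max (P * (R / P - t)) 0"
    by (simp add: max_def mult_le_0_iff)
  also have "P * (R / P - t) = R - t * P" using \<open>P > 0\<close> by (simp add: field_simps)
  finally show ?thesis using False by simp
qed simp

lemma conv2: "0 \<le> (R::real) \<Longrightarrow> R \<le> P \<Longrightarrow>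
   P * max (t - (if P = 0 then 0 else R / P)) 0 = max (t * P - R) 0"
proof (cases "P = 0")
  case False
  assume "0 \<le> R" "R \<le> P"
  then have "P > 0" using False by simp
  then have "P * max (t - R / P) 0 = max (P * (t - R / P)) 0"
    by (simp add: max_def mult_le_0_iff)
  also have "P * (t - R / P) = t * P - R" using \<open>P > 0\<close> by (simp add: field_simps)
  finally show ?thesis using False by simp
qed simp

context
  fixes D :: "(real \<times> bool) measure"
  assumes D: "dist01 D"
begin

lemma ps: "prob_space D" using D unfolding dist01_def by simp
lemma sD: "sets D = sets borel" using D unfolding dist01_def by simp
lemma AE01: "AE x in D. fst x \<in> {0..1}" using D unfolding dist01_def by simp

lemma measD: "f \<in> borel_measurable borel \<Longrightarrow> f \<in> borel_measurable D"
  by (subst measurable_cong_sets[OF sD refl])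

lemma integ:
  assumes c: "c \<in> borel_measurable borel" "\<And>x. \<bar>c x\<bar> \<le> 1"
  shows "integrable D (\<lambda>x. wt k l (fst x) * c x)"
proof -
  interpret prob_space D by (rule ps)
  show ?thesis
  proof (rule integrable_const_bound[where B=1])
    show "AE x in D. norm (wt k l (fst x) * c x) \<le> 1"
    proof (rule AE_I2)
      fix x
      have "\<bar>wt k l (fst x)\<bar> * \<bar>c x\<bar> \<le> 1 * 1"
        using wt_nonneg wt_le1 c(2) by (intro mult_mono) auto
      then show "norm (wt k l (fst x) * c x) \<le> 1" by (simp add: abs_mult)
    qed
    show "(\<lambda>x. wt k l (fst x) * c x) \<in> borel_measurable D"
      using meas_wt c(1) by (intro measD) measurable
  qed
qed

lemma refine_int:
  assumes c: "c \<in> borel_measurable borel" "\<And>x. \<bar>c x\<bar> \<le> 1"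
  shows "(\<integral>x. wt m j (fst x) * c x \<partial>D) =
     (if j > 0 then (\<integral>x. wt (2*m) (2*j-1) (fst x) * c x \<partial>D) / 2 else 0)
     + (\<integral>x. wt (2*m) (2*j) (fst x) * c x \<partial>D) + (\<integral>x. wt (2*m) (2*j+1) (fst x) * c x \<partial>D) / 2"
proof -
  note I = integ[OF c]
  note [measurable] = meas_wt c(1)
  have "(\<integral>x. wt m j (fst x) * c x \<partial>D) =
     (\<integral>x. (if j > 0 then wt (2*m) (2*j-1) (fst x) * c x / 2 else 0)
     + wt (2*m) (2*j) (fst x) * c x + wt (2*m) (2*j+1) (fst x) * c x / 2 \<partial>D)"
  proof (rule integral_cong_AE)
    show "(\<lambda>x. wt m j (fst x) * c x) \<in> borel_measurable D"
      using meas_wt c(1) by (intro measD) measurable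
    show "(\<lambda>x. (if j > 0 then wt (2*m) (2*j-1) (fst x) * c x / 2 else 0)
     + wt (2*m) (2*j) (fst x) * c x + wt (2*m) (2*j+1) (fst x) * c x / 2) \<in> borel_measurable D"
      by (intro measD) measurable
    show "AE x in D. wt m j (fst x) * c x = (if j > 0 then wt (2*m) (2*j-1) (fst x) * c x / 2 else 0)
     + wt (2*m) (2*j) (fst x) * c x + wt (2*m) (2*j+1) (fst x) * c x / 2"
      using AE01
    proof eventually_elim
      case (elim x)
      then have "0 \<le> fst x" by simp
      from wt_refine[OF this, of m j] show ?case by (simp add: algebra_simps)
    qed
  qed
  also have "\<dots> = (if j > 0 then (\<integral>x. wt (2*m) (2*j-1) (fst x) * c x \<partial>D) / 2 else 0)
     + (\<integral>x. wt (2*m) (2*j) (fst x) * c x \<partial>D) + (\<integral>x. wt (2*m) (2*j+1) (fst x) * c x \<partial>D) / 2"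
  proof (cases "j > 0")
    case True
    then show ?thesis
      by (simp add: integral_add I integrable_divide_zero integral_divide_zero)
  next
    case False
    then show ?thesis
      by (simp add: integral_add I integrable_divide_zero integral_divide_zero)
  qed
  finally show ?thesis .
qed


lemma top_int:
  "(\<integral>x. wt (2*m) (2*m+1) (fst x) * c x \<partial>D) = 0"
proof (rule integral_eq_zero_AE)
  show "AE x in D. wt (2*m) (2*m+1) (fst x) * c x = 0"
    using AE01 by eventually_elim (use wt_top[of _ m] in force)
qed

lemma bnd_int: "0 \<le> (\<integral>x. wt m j (fst x) * of_bool (snd x) \<partial>D)"
   "(\<integral>x. wt m j (fst x) * of_bool (snd x) \<partial>D) \<le> piw D m j"
   "0 \<le> piw D m j"
proof -
  have i1: "integrable D (\<lambda>x. wt m j (fst x) * of_bool (snd x))"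
    by (rule integ[OF meas_b]) simp
  have i2: "integrable D (\<lambda>x. wt m j (fst x) * 1)"
    by (rule integ) auto
  show "0 \<le> (\<integral>x. wt m j (fst x) * of_bool (snd x) \<partial>D)"
    by (intro integral_nonneg_AE AE_I2) (simp add: wt_nonneg)
  show "0 \<le> piw D m j" unfolding piw_def
    by (intro integral_nonneg_AE AE_I2) (simp add: wt_nonneg)
  have "(\<integral>x. wt m j (fst x) * of_bool (snd x) \<partial>D) \<le> (\<integral>x. wt m j (fst x) * 1 \<partial>D)"
    using i1 i2 by (intro integral_mono) (auto simp: wt_nonneg)
  then show "(\<integral>x. wt m j (fst x) * of_bool (snd x) \<partial>D) \<le> piw D m j"
    unfolding piw_def by simp
qed

end

theorem lemma3p3:
  fixes m :: nat and D :: "(real \<times> bool) measure"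
  assumes "m > 0" and "dist01 D"
  shows "SCDL (2 * m) D \<ge> SCDL m D"
proof -
  note D = assms(2)
  define R where "R k j = (\<integral>x. wt k j (fst x) * of_bool (snd x) \<partial>D)" for k j
  have qwR: "qw D k j = (if piw D k j = 0 then 0 else R k j / piw D k j)" for k j
    unfolding qw_def R_def by simp
  have Rb: "0 \<le> R k j" "R k j \<le> piw D k j" "0 \<le> piw D k j" for k j
    unfolding R_def using bnd_int[OF D] by auto
  have Fref: "piw D m j = (if j>0 then piw D (2*m) (2*j-1)/2 else 0) + piw D (2*m) (2*j) + piw D (2*m) (2*j+1)/2" for j
    using refine_int[OF D, of "\<lambda>x. 1" m j] unfolding piw_def by simp
  have Gref: "R m j = (if j>0 then R (2*m) (2*j-1)/2 else 0) + R (2*m) (2*j) + R (2*m) (2*j+1)/2" for j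
    using refine_int[OF D meas_b, of m j] unfolding R_def by simp
  have topf: "piw D (2*m) (2*m+1) = 0"
    using top_int[OF D, of m "\<lambda>x. 1"] unfolding piw_def by simp
  have topg: "R (2*m) (2*m+1) = 0"
    using top_int[OF D, of m "\<lambda>x. of_bool (snd x)"] unfolding R_def by simp
  define h where "h k i = (\<Sum>j=0..i. max (R k j - real (i+1) / real k * piw D k j) 0)
       + (\<Sum>j\<in>{i+1..k}. max (real i / real k * piw D k j - R k j) 0)" for k i
  have SC: "SCDL k D = Max (h k ` {0..k})" for k
  proof -
    have "(\<Sum>j\<in>{0..i}. piw D k j * max (qw D k j - real (i + 1) / real k) 0)
          + (\<Sum>j\<in>{i+1..k}. piw D k j * max (real i / real k - qw D k j) 0) = h k i" for i
      unfolding h_def qwR using Rb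
      by (intro arg_cong2[where f="(+)"] sum.cong refl conv1 conv2) auto
    then show ?thesis unfolding SCDL_def by simp
  qed
  show ?thesis unfolding SC
  proof (subst Max_le_iff, simp, simp, intro ballI)
    fix a assume "a \<in> h m ` {0..m}"
    then obtain i where i: "i \<le> m" and a: "a = h m i" by auto
    obtain i' where i': "i' \<in> {0..2*m}" and le: "h m i \<le> h (2*m) i'"
      using comb[OF assms(1), of "piw D (2*m)" "piw D m" "R m" "R (2*m)" i, OF Rb(3) Fref Gref topf topg i]
      unfolding h_def by blast
    show "a \<le> Max (h (2*m) ` {0..2*m})"
      using i' le a by (subst Max_ge_iff) auto
  qed
qed

end
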